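(* Let $F_2,F_4$ be real numbers with $F_4\ge F_2^2$, and let $p=\frac{3}{\sqrt{21}}$. Then \[(1-p)\,\frac{3+3F_2}{4}+p\,\frac{15-6F_2-F_4}{16}\;\le\;\frac{3(\sqrt{21}-4)}{2}\;<\;0.8739.\] (Interpretation: if the average performance on $3$-clauses is $\frac{3+3F_2}{4}$, the average performance on $5$-clauses is $\frac{15-6F_2-F_4}{16}$, and $F_4\ge F_2^2$, then on the distribution choosing a random $3$-clause with probability $1-\frac{3}{\sqrt{21}}$ and a random $5$-clause with probability $\frac{3}{\sqrt{21}}$, the average performance is at most $\frac{3(\sqrt{21}-4)}{2}$.) *)

theory Defs
  imports Complex_Main
begin

end

theory Submission
  imports Defs
begin

theorem mainTheorem6:
  fixes F2 F4 p :: real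
  assumes "F4 \<ge> F2\<^sup>2"
    and "p = 3 / sqrt 21"
  shows "(1 - p) * ((3 + 3 * F2) / 4) + p * ((15 - 6 * F2 - F4) / 16) \<le> 3 * (sqrt 21 - 4) / 2
         \<and> 3 * (sqrt 21 - 4) / 2 < (0.8739::real)"
proof -
  define s where "s = sqrt 21"
  have s2: "s * s = 21" unfolding s_def by simp
  have sp: "s > 0" unfolding s_def by simp
  have pp: "p > 0" using assms(2) s_def sp by simp
  have A: "(1 - p) * ((3 + 3 * F2) / 4) + p * ((15 - 6 * F2 - F4) / 16)
      \<le> (1 - p) * ((3 + 3 * F2) / 4) + p * ((15 - 6 * F2 - F2\<^sup>2) / 16)"
    using assms(1) pp by (simp add: mult_left_mono)
  have "s * ((1 - p) * ((3 + 3 * F2) / 4) + p * ((15 - 6 * F2 - F2\<^sup>2) / 16))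
      = (s - 3) * (3 + 3*F2)/4 + 3 * (15 - 6*F2 - F2\<^sup>2)/16"
    unfolding assms(2) s_def[symmetric] using sp by (simp add: field_simps power2_eq_square)
  also have "\<dots> = s * (3 * (s - 4) / 2) - 3/16 * (F2 - (2*s - 9))\<^sup>2"
    using s2 by (simp add: power2_eq_square field_simps)
  also have "\<dots> \<le> s * (3 * (s - 4) / 2)" by simp
  finally have B: "(1 - p) * ((3 + 3 * F2) / 4) + p * ((15 - 6 * F2 - F2\<^sup>2) / 16) \<le> 3 * (s - 4) / 2"
    using sp by (simp add: mult_le_cancel_left_pos)
  have C: "s < 4.5826"
  proof (rule ccontr)
    assume "\<not> s < 4.5826"
    hence "s \<ge> 4.5826" by simp
    hence "s * s \<ge> 4.5826 * 4.5826" using mult_mono by fastforce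
    thus False using s2 by simp
  qed
  show ?thesis using A B C unfolding s_def by simp
qed

end
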